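(* Assume the reduced model family $(V_k)_{k=1,\dots,K}$ is $\sigma$-admissible for some $\sigma>0$. Let $u^*(w)$ be the estimator obtained by surrogate model selection. Then $$E_{wc}:=\sup_{u\in\mathcal M}\|u-u^*(P_Wu)\|\le \delta_{\kappa\sigma},\qquad \kappa=R/r.$$ In particular, for the idealized selection in which $k^*(w)$ minimizes $\operatorname{dist}(u_k^*(w),\mathcal M)$ over $k$ (i.e. $\mathcal S=\operatorname{dist}$, $r=R=1$), one has $E_{wc}\le\delta_\sigma$.
   Context: Let $V$ be a real Hilbert space with norm $\|\cdot\|$. Let $Y\subset\mathbb R^d$ be compact and let $y\mapsto u(y)$ be a continuous map from $Y$ to $V$. Set $\mathcal M=\{u(y):y\in Y\}$, which is compact. Let $W\subset V$ be a linear subspace of finite dimension $m$, let $P_W$ be the orthogonal projection onto $W$, and let $W^\perp$ be its orthogonal complement. For $w\in W$ put $V_w=w+W^\perp$. For $\sigma\ge 0$ define - $\mathcal M_\sigma=\{v\in V:\operatorname{dist}(v,\mathcal M)\le\sigma\}$; - $\delta_\sigma=\sup\{\|u-v\|: u,v\in\mathcal M_\sigma,\ u-v\in W^\perp\}$. For a finite-dimensional subspace $E\subset V$ let $\mu(E,W)=\sup_{v\in E\setminus\{0\}}\|v\|/\|P_Wv\|$, with the conventions $\mu(\{0\},W)=1$ and $\mu(E,W)=+\infty$ if $E\cap W^\perp\ne\{0\}$. A reduced model family consists of: - sets $\mathcal M_1,\dots,\mathcal M_K$ with $\mathcal M=\bigcup_{k=1}^K\mathcal M_k$; - affine spaces $V_k=\bar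 u_k+\bar V_k$, where $\bar u_k\in V$ and $\bar V_k$ is a linear subspace of dimension $n_k\le m$; - numbers $\varepsilon_k\ge\sup_{u\in\mathcal M_k}\operatorname{dist}(u,V_k)$; - constants $\mu_k=\mu(\bar V_k,W)<\infty$. The family is $\sigma$-admissible if $\mu_k\varepsilon_k\le\sigma$ for all $k$. It is $(\varepsilon,\mu)$-admissible if $\varepsilon_k\le\varepsilon$ and $\mu_k\le\mu$ for all $k$. For $w\in W$ the PBDW estimators are $u_k^*(w)=\operatorname{argmin}\{\operatorname{dist}(v,V_k): v\in V_w\}$, $k=1,\dots,K$ (the minimizer is unique). A surrogate is a function $\mathcal S(\cdot,\mathcal M):V\to[0,\infty)$ with $r\operatorname{dist}(v,\mathcal M)\le\mathcal S(v,\mathcal M)\le R\operatorname{dist}(v,\mathcal M)$ for all $v\in V$, where $0<r\le R$ are constants; set $\kappa=R/r$. Surrogate model selection picks $k^*(w)$ as any minimizer of $k\mapsto\mathcal S(u_k^*(w),\mathcal M)$ over $\{1,\dots,K\}$ and sets $u^*(w)=u^*_{k^*(w)}(w)$. *)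

theory Defs
  imports "HOL-Analysis.Analysis"
begin

definition subspace_of_dim :: "'v::real_vector set \<Rightarrow> nat \<Rightarrow> bool" where
  "subspace_of_dim E n \<longleftrightarrow> subspace E \<and>
     (\<exists>B. finite B \<and> independent B \<and> span B = E \<and> card B = n)"

definition projW :: "'v::real_inner set \<Rightarrow> 'v \<Rightarrow> 'v" where
  "projW W v = (THE p. p \<in> W \<and> v - p \<in> orthogonal_comp W)"

definition Vw :: "'v::real_inner set \<Rightarrow> 'v \<Rightarrow> 'v set" where
  "Vw W w = (\<lambda>z. w + z) ` orthogonal_comp W"

definition Msig :: "'v::real_inner set \<Rightarrow> real \<Rightarrow> 'v set" where
  "Msig M \<sigma> = {v. infdist v M \<le> \<sigma>}"

definition delta :: "'v::real_inner set \<Rightarrow> 'v set \<Rightarrow> real \<Rightarrow> ereal" where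
  "delta M W \<sigma> = Sup {ereal (norm (u - v)) | u v.
      u \<in> Msig M \<sigma> \<and> v \<in> Msig M \<sigma> \<and> u - v \<in> orthogonal_comp W}"

definition mu :: "'v::real_inner set \<Rightarrow> 'v set \<Rightarrow> ereal" where
  "mu E W = (if E \<inter> orthogonal_comp W \<noteq> {0} then \<infinity>
             else if E = {0} then 1
             else (SUP v\<in>E - {0}. ereal (norm v / norm (projW W v))))"

definition pbdw :: "'v::real_inner set \<Rightarrow> 'v set \<Rightarrow> 'v \<Rightarrow> 'v" where
  "pbdw W Vk w = (THE v. is_arg_min (\<lambda>v. infdist v Vk) (\<lambda>v. v \<in> Vw W w) v)"

end

theory Submission imports Defs begin

lemma GS_step:
  fixes S :: "'a::real_inner set"
  assumes S: "pairwise orthogonal S" and fin: "finite S" and x: "x \<in> span S"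
    shows "orthogonal x (a - (\<Sum>b\<in>S. (b \<bullet> a / (b \<bullet> b)) *\<^sub>R b))"
proof -
  have "orthogonal (a - (\<Sum>b\<in>S. (b \<bullet> a / (b \<bullet> b)) *\<^sub>R b)) x"
       if "x \<in> S" for x
  proof -
    have "a \<bullet> x = (\<Sum>y\<in>S. if y = x then y \<bullet> a else 0)"
      by (simp add: fin inner_commute that)
    also have "\<dots> =  (\<Sum>b\<in>S. b \<bullet> a * (b \<bullet> x) / (b \<bullet> b))"
      apply (rule sum.cong [OF refl], simp)
      by (meson S orthogonal_def pairwise_def that)
   finally show ?thesis
     by (simp add: orthogonal_def algebra_simps inner_sum_left)
  qed
  then show ?thesis
    using orthogonal_to_span orthogonal_commute x by blast
qed

lemma orth_ext_aux:
  fixes S :: "'a::real_inner set"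
  assumes "finite T" "finite S" "pairwise orthogonal S"
    shows "\<exists>U. finite U \<and> pairwise orthogonal (S \<union> U) \<and> span (S \<union> U) = span (S \<union> T)"
using assms
proof (induction arbitrary: S)
  case empty then show ?case
    by (metis finite.emptyI sup_bot_right)
next
  case (insert a T)
  have 0: "\<And>x y. \<lbrakk>x \<noteq> y; x \<in> S; y \<in> S\<rbrakk> \<Longrightarrow> x \<bullet> y = 0"
    using insert by (simp add: pairwise_def orthogonal_def)
  define a' where "a' = a - (\<Sum>b\<in>S. (b \<bullet> a / (b \<bullet> b)) *\<^sub>R b)"
  have orthS: "\<And>x. x \<in> S \<Longrightarrow> orthogonal x a'"
    using GS_step a'_def insert.prems span_base by blast
  obtain U where finU: "finite U" and orthU: "pairwise orthogonal (insert a' S \<union> U)"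
             and spanU: "span (insert a' S \<union> U) = span (insert a' S \<union> T)"
    using insert.IH [of "insert a' S"] insert.prems orthS
    by (metis finite_insert orthogonal_commute pairwise_orthogonal_insert)
  have "span (S \<union> insert a' U) = span (insert a' (S \<union> T))"
    using spanU by simp
  also have "\<dots> = span (insert a (S \<union> T))"
    by (simp add: a'_def span_neg span_sum span_base span_mul eq_span_insert_eq)
  also have "\<dots> = span (S \<union> insert a T)"
    by simp
  finally show ?case
    using orthU finU by (metis Un_insert_left Un_insert_right finite_insert)
qed

lemma orth_decomp:
  fixes T :: "'a::real_inner set"
  assumes "finite T"
  shows "\<exists>p\<in>span T. \<forall>y\<in>span T. orthogonal y (v - p)"
proof -
  obtain U where U: "finite U" "pairwise orthogonal U" "span U = span T"
    using orth_ext_aux[of T "{}"] assms by auto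
  define p where "p = (\<Sum>b\<in>U. (b \<bullet> v / (b \<bullet> b)) *\<^sub>R b)"
  have "p \<in> span U" unfolding p_def by (intro span_sum span_mul span_base)
  moreover have "\<forall>y\<in>span U. orthogonal y (v - p)"
    using GS_step[OF U(2) U(1)] p_def by blast
  ultimately show ?thesis using U(3) by auto
qed

lemma orth_mem: "x \<in> orthogonal_comp W \<longleftrightarrow> (\<forall>y\<in>W. y \<bullet> x = 0)"
  by (simp add: orthogonal_comp_def orthogonal_def)

lemma infdist_geI:
  assumes "A \<noteq> {}" "\<And>z. z \<in> A \<Longrightarrow> d \<le> dist x z"
  shows "d \<le> infdist x A"
  using assms by (simp add: infdist_notempty cINF_greatest)

lemma nonlin:
  fixes al be ga et mu d hn :: real
  assumes "0 \<le> al" "0 \<le> be" "0 \<le> ga" "0 \<le> et" "1 \<le> mu"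
    and "d\<^sup>2 = be\<^sup>2 + al\<^sup>2" and "hn\<^sup>2 = et\<^sup>2 + ga\<^sup>2" and "et\<^sup>2 \<le> be\<^sup>2" and "hn \<le> mu * et"
    and "0 \<le> d" "0 \<le> hn"
  shows "al + ga \<le> mu * d"
proof -
  define t where "t = mu\<^sup>2 - 1"
  have t0: "0 \<le> t" unfolding t_def using assms(5) by (simp add: one_le_power)
  have "hn\<^sup>2 \<le> (mu * et)\<^sup>2" using assms(9,11) by (simp add: power_mono)
  hence g1: "ga\<^sup>2 \<le> t * et\<^sup>2" using assms(7) unfolding t_def by (simp add: power_mult_distrib algebra_simps)
  have g2: "ga\<^sup>2 \<le> t * be\<^sup>2" using g1 t0 assms(8) by (meson mult_left_mono order_trans)
  have "(2 * al * ga)\<^sup>2 = 4 * al\<^sup>2 * ga\<^sup>2" by (simp add: power_mult_distrib)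
  also have "\<dots> \<le> 4 * al\<^sup>2 * (t * be\<^sup>2)" using g2 by (simp add: mult_left_mono)
  also have "\<dots> \<le> (t * al\<^sup>2 + be\<^sup>2)\<^sup>2"
  proof -
    have "0 \<le> (t * al\<^sup>2 - be\<^sup>2)\<^sup>2" by simp
    thus ?thesis by (simp add: power2_eq_square algebra_simps)
  qed
  finally have "2 * al * ga \<le> t * al\<^sup>2 + be\<^sup>2"
    by (rule power2_le_imp_le) (use t0 in simp)
  moreover have "(mu * d)\<^sup>2 = mu\<^sup>2 * al\<^sup>2 + mu\<^sup>2 * be\<^sup>2"
    using assms(6) by (simp add: power_mult_distrib algebra_simps)
  moreover have "(al + ga)\<^sup>2 = al\<^sup>2 + 2 * al * ga + ga\<^sup>2" by (simp add: power2_sum)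
  moreover have "t * al\<^sup>2 = mu\<^sup>2 * al\<^sup>2 - al\<^sup>2" "t * be\<^sup>2 = mu\<^sup>2 * be\<^sup>2 - be\<^sup>2"
    unfolding t_def by (simp_all add: algebra_simps)
  ultimately have "(al + ga)\<^sup>2 \<le> (mu * d)\<^sup>2" using g2 by linarith
  moreover have "0 \<le> mu * d" using assms(5,10) by simp
  ultimately show ?thesis by (rule power2_le_imp_le)
qed

context
  fixes BW :: "'a::real_inner set" and W
  assumes finW: "finite BW" and Wsp: "W = span BW"
begin

lemma P_ex: "\<exists>!p. p \<in> W \<and> v - p \<in> orthogonal_comp W"
proof -
  obtain p where p: "p \<in> W" "\<forall>y\<in>W. orthogonal y (v - p)"
    using orth_decomp[OF finW, of v] Wsp by auto
  show ?thesis
  proof (rule ex1I[of _ p])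
    show "p \<in> W \<and> v - p \<in> orthogonal_comp W" using p by (simp add: orthogonal_comp_def)
    fix q assume q: "q \<in> W \<and> v - q \<in> orthogonal_comp W"
    have "p - q \<in> W" using p q Wsp by (simp add: span_diff)
    moreover have "p - q = (v - q) - (v - p)" by simp
    hence "p - q \<in> orthogonal_comp W"
      using subspace_diff[OF subspace_orthogonal_comp, of "v-q" W "v-p"] p q
      by (simp add: orthogonal_comp_def)
    ultimately have "(p - q) \<bullet> (p - q) = 0" by (simp add: orth_mem)
    thus "q = p" by simp
  qed
qed

lemma P_in: "projW W v \<in> W" and P_orth: "v - projW W v \<in> orthogonal_comp W"
  using theI'[OF P_ex[of v]] unfolding projW_def by auto

lemma P_uniq: "p \<in> W \<Longrightarrow> v - p \<in> orthogonal_comp W \<Longrightarrow> projW W v = p"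
  using P_ex[of v] P_in P_orth by blast

lemma subW: "subspace W" using Wsp by simp

lemma P_lin: "linear (projW W)"
proof (rule linearI)
  fix x y
  show "projW W (x + y) = projW W x + projW W y"
  proof (rule P_uniq)
    show "projW W x + projW W y \<in> W" using P_in subW by (simp add: subspace_add)
    have e: "x + y - (projW W x + projW W y) = (x - projW W x) + (y - projW W y)" by simp
    show "x + y - (projW W x + projW W y) \<in> orthogonal_comp W"
      using subspace_add[OF subspace_orthogonal_comp, of "x - projW W x" W "y - projW W y"] P_orth by (simp only: e)
  qed
next
  fix c :: real and x
  show "projW W (c *\<^sub>R x) = c *\<^sub>R projW W x"
  proof (rule P_uniq)
    show "c *\<^sub>R projW W x \<in> W" using P_in subW by (simp add: subspace_scale)
    have "c *\<^sub>R x - c *\<^sub>R projW W x = c *\<^sub>R (x - projW W x)" by (simp add: algebra_simps)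
    thus "c *\<^sub>R x - c *\<^sub>R projW W x \<in> orthogonal_comp W"
      using subspace_scale[OF subspace_orthogonal_comp, of "x - projW W x" W c] P_orth by simp
  qed
qed

lemma P_add: "projW W (x + y) = projW W x + projW W y"
  and P_diff: "projW W (x - y) = projW W x - projW W y"
  using P_lin by (auto simp: linear_add linear_diff)

lemma P_id: "w \<in> W \<Longrightarrow> projW W w = w"
  by (rule P_uniq) (auto simp: orth_mem)

lemma P_zero: "q \<in> orthogonal_comp W \<Longrightarrow> projW W q = 0"
  by (rule P_uniq) (auto simp: subW subspace_0)

lemma P_pyth: "(norm v)\<^sup>2 = (norm (projW W v))\<^sup>2 + (norm (v - projW W v))\<^sup>2"
proof -
  have "orthogonal (projW W v) (v - projW W v)"
    using P_in P_orth by (simp add: orth_mem orthogonal_def)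
  from norm_add_Pythagorean[OF this] show ?thesis by simp
qed

lemma P_norm_le: "norm (projW W v) \<le> norm v"
  proof -
  have "(norm (projW W v))\<^sup>2 \<le> (norm v)\<^sup>2" using P_pyth[of v] by simp
  thus ?thesis by (rule power2_le_imp_le) simp
qed

lemma mu_real:
  assumes Esp: "subspace E" and fin: "mu E W < \<infinity>"
  shows "\<exists>\<mu>. 1 \<le> \<mu> \<and> mu E W = ereal \<mu> \<and> (\<forall>h\<in>E. norm h \<le> \<mu> * norm (projW W h))"
proof -
  have int: "E \<inter> orthogonal_comp W = {0}"
    using fin unfolding mu_def by (auto split: if_splits)
  have Pnz: "projW W h \<noteq> 0" if "h \<in> E" "h \<noteq> 0" for h
  proof
    assume "projW W h = 0"
    hence "h \<in> orthogonal_comp W" using P_orth[of h] by simp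
    thus False using int that by auto
  qed
  show ?thesis
  proof (cases "E = {0}")
    case True thus ?thesis using int unfolding mu_def by auto
  next
    case False
    define S where "S = (SUP v\<in>E - {0}. ereal (norm v / norm (projW W v)))"
    have muS: "mu E W = S" unfolding mu_def S_def using int False by auto
    obtain h0 where h0: "h0 \<in> E" "h0 \<noteq> 0" using False subspace_0[OF Esp] by blast
    have r1: "1 \<le> norm h / norm (projW W h)" if "h \<in> E" "h \<noteq> 0" for h
      using Pnz[OF that] P_norm_le[of h] by simp
    have "ereal (norm h0 / norm (projW W h0)) \<le> S" unfolding S_def
      using h0 by (intro SUP_upper) auto
    hence S1: "ereal 1 \<le> S" using r1[OF h0] by (meson ereal_less_eq(3) order_trans)
    have Sfin: "S < \<infinity>" using fin muS by simp
    obtain \<mu> where Sm: "S = ereal \<mu>" using S1 Sfin by (cases S) auto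
    have m1: "1 \<le> \<mu>" using S1 Sm by simp
    have "norm h \<le> \<mu> * norm (projW W h)" if "h \<in> E" for h
    proof (cases "h = 0")
      case False
      have "ereal (norm h / norm (projW W h)) \<le> S" unfolding S_def
        using that False by (intro SUP_upper) auto
      hence "norm h / norm (projW W h) \<le> \<mu>" using Sm by simp
      thus ?thesis using Pnz[OF that False] by (simp add: pos_divide_le_eq)
    qed (simp add: linear_0[OF P_lin])
    thus ?thesis using m1 Sm muS by auto
  qed
qed

lemma pbdw_main:
  fixes E :: "'a set" and a :: 'a
  assumes finE: "finite BE" and Esp: "E = span BE"
    and muE: "\<forall>h\<in>E. norm h \<le> \<mu> * norm (projW W h)" and mu1: "1 \<le> \<mu>" and w: "w \<in> W"
  shows "pbdw W ((\<lambda>z. a + z) ` E) w \<in> Vw W w \<and>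
    (\<forall>x. projW W x = w \<longrightarrow> norm (x - pbdw W ((\<lambda>z. a + z) ` E) w) \<le> \<mu> * infdist x ((\<lambda>z. a + z) ` E))"
proof -
  let ?P = "projW W"
  let ?Vk = "(\<lambda>z. a + z) ` E"
  define c where "c = w - ?P a"
  have spP: "span (?P ` BE) = ?P ` E" using span_linear_image[OF P_lin] Esp by simp
  obtain g0 where g0: "g0 \<in> ?P ` E" "\<forall>y\<in>?P ` E. orthogonal y (c - g0)"
    using orth_decomp[of "?P ` BE" c] finE spP by auto
  then obtain es where es: "es \<in> E" "g0 = ?P es" by auto
  have subE: "subspace E" using Esp by simp
  have cW: "c \<in> W" unfolding c_def using w P_in subW by (simp add: subspace_diff)
  have cg0W: "c - g0 \<in> W" using cW es P_in subW by (simp add: subspace_diff)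
  define m where "m = norm (c - g0)"
  define us where "us = a + es + (c - g0)"
  have Pus: "?P us = w" unfolding us_def using P_add P_id[OF cg0W] es c_def by simp
  have usV: "us \<in> Vw W w"
  proof -
    have "us - w \<in> orthogonal_comp W" using P_orth[of us] Pus by simp
    thus ?thesis unfolding Vw_def by (rule image_eqI[rotated]) simp
  qed
  have VwP: "?P v = w" if "v \<in> Vw W w" for v
    using that w unfolding Vw_def by (auto simp: P_add P_id P_zero)
  have keyB: "(norm (v - (a + e)))\<^sup>2 = m\<^sup>2 + (norm (g0 - ?P e))\<^sup>2
       + (norm ((v - (a + e)) - ?P (v - (a + e))))\<^sup>2" if v: "?P v = w" and e: "e \<in> E" for v e
  proof -
    have eq: "?P (v - (a + e)) = (c - g0) + (g0 - ?P e)"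
      using v c_def by (simp add: P_diff P_add)
    have "g0 - ?P e = ?P (es - e)" using es by (simp add: P_diff)
    moreover have "es - e \<in> E" using es e subE by (simp add: subspace_diff)
    ultimately have "orthogonal (g0 - ?P e) (c - g0)" using g0(2) by auto
    hence "orthogonal (c - g0) (g0 - ?P e)" by (simp add: orthogonal_commute)
    from norm_add_Pythagorean[OF this] eq
    have "(norm (?P (v - (a + e))))\<^sup>2 = m\<^sup>2 + (norm (g0 - ?P e))\<^sup>2" by (simp add: m_def)
    thus ?thesis using P_pyth[of "v - (a + e)"] by simp
  qed
  have Vne: "?Vk \<noteq> {}" using subE subspace_0 by blast
  have lowB: "m \<le> infdist v ?Vk" if v: "?P v = w" for v
  proof (rule infdist_geI[OF Vne])
    fix z assume "z \<in> ?Vk"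
    then obtain e where e: "e \<in> E" "z = a + e" by auto
    have "m\<^sup>2 \<le> (norm (v - z))\<^sup>2" using keyB[OF v e(1)] e(2) by simp
    hence "m \<le> norm (v - z)" by (rule power2_le_imp_le) simp
    thus "m \<le> dist v z" by (simp add: dist_norm)
  qed
  have usdist: "infdist us ?Vk \<le> m"
  proof -
    have "a + es \<in> ?Vk" using es by auto
    hence "infdist us ?Vk \<le> dist us (a + es)" by (rule infdist_le)
    also have "\<dots> = m" unfolding us_def m_def dist_norm by simp
    finally show ?thesis .
  qed
  have closest: "\<exists>p\<in>E. norm (v - (a + p)) \<le> infdist v ?Vk" for v
  proof -
    obtain p where p: "p \<in> E" "\<forall>y\<in>E. orthogonal y ((v - a) - p)"
      using orth_decomp[OF finE, of "v - a"] Esp by auto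
    have "norm (v - (a + p)) \<le> infdist v ?Vk"
    proof (rule infdist_geI[OF Vne])
      fix z assume "z \<in> ?Vk"
      then obtain e where e: "e \<in> E" "z = a + e" by auto
      have "p - e \<in> E" using p e subE by (simp add: subspace_diff)
      hence "orthogonal ((v - a) - p) (p - e)" using p(2) by (simp add: orthogonal_commute)
      from norm_add_Pythagorean[OF this]
      have "(norm (v - z))\<^sup>2 = (norm (v - (a + p)))\<^sup>2 + (norm (p - e))\<^sup>2"
        using e(2) by (simp add: algebra_simps)
      hence "(norm (v - (a + p)))\<^sup>2 \<le> (norm (v - z))\<^sup>2" by simp
      hence "norm (v - (a + p)) \<le> norm (v - z)" by (rule power2_le_imp_le) simp
      thus "norm (v - (a + p)) \<le> dist v z" by (simp add: dist_norm)
    qed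
    thus ?thesis using p(1) by blast
  qed
  have inj: "h = 0" if "h \<in> E" "?P h = 0" for h
    using muE that by (metis mult_zero_right norm_eq_zero norm_le_zero_iff norm_zero)
  have pb: "pbdw W ?Vk w = us"
    unfolding pbdw_def
  proof (rule the_equality)
    show "is_arg_min (\<lambda>v. infdist v ?Vk) (\<lambda>v. v \<in> Vw W w) us"
      unfolding is_arg_min_def using usV usdist lowB VwP by (meson not_le order_trans)
  next
    fix v assume am: "is_arg_min (\<lambda>v. infdist v ?Vk) (\<lambda>v. v \<in> Vw W w) v"
    hence vV: "v \<in> Vw W w" and le: "infdist v ?Vk \<le> infdist us ?Vk"
      unfolding is_arg_min_def using usV by (auto simp: not_less)
    have Pv: "?P v = w" using VwP[OF vV] .
    obtain p where p: "p \<in> E" "norm (v - (a + p)) \<le> infdist v ?Vk" using closest by blast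
    have "norm (v - (a + p)) \<le> m" using p(2) le usdist by simp
    hence "(norm (v - (a + p)))\<^sup>2 \<le> m\<^sup>2" by (simp add: power_mono)
    with keyB[OF Pv p(1)]
    have "(norm (g0 - ?P p))\<^sup>2 + (norm ((v - (a + p)) - ?P (v - (a + p))))\<^sup>2 \<le> 0" by simp
    hence "(norm (g0 - ?P p))\<^sup>2 = 0" "(norm ((v - (a + p)) - ?P (v - (a + p))))\<^sup>2 = 0"
      by (smt (verit) zero_le_power2)+
    hence z1: "norm (g0 - ?P p) = 0" and z2: "norm ((v - (a + p)) - ?P (v - (a + p))) = 0"
      by simp_all
    have "?P (es - p) = 0" using z1 es by (simp add: P_diff)
    moreover have "es - p \<in> E" using es p subE by (simp add: subspace_diff)
    ultimately have "es - p = 0" using inj by blast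
    hence "es = p" by simp
    hence "v - (a + es) = ?P (v - (a + es))" using z2 by simp
    also have "\<dots> = c - g0" using Pv es c_def by (simp add: P_diff P_add)
    finally show "v = us" unfolding us_def by (simp add: algebra_simps)
  qed
  have err: "norm (x - us) \<le> \<mu> * infdist x ?Vk" if Px: "?P x = w" for x
  proof -
    obtain e0 where e0: "e0 \<in> E" "norm (x - (a + e0)) \<le> infdist x ?Vk" using closest by blast
    define d where "d = norm (x - (a + e0))"
    define h where "h = e0 - es"
    have hE: "h \<in> E" unfolding h_def using e0 es subE by (simp add: subspace_diff)
    define r1 where "r1 = x - (a + e0)"
    have decomp: "x - us = (r1 - ?P r1) + (h - ?P h)"
      unfolding r1_def h_def us_def using Px es c_def by (simp add: P_diff P_add algebra_simps)
    have pyr: "d\<^sup>2 = (norm (?P r1))\<^sup>2 + (norm (r1 - ?P r1))\<^sup>2" using P_pyth[of r1] d_def r1_def by simp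
    have pyh: "(norm h)\<^sup>2 = (norm (?P h))\<^sup>2 + (norm (h - ?P h))\<^sup>2" using P_pyth[of h] by simp
    have bet: "(norm (?P h))\<^sup>2 \<le> (norm (?P r1))\<^sup>2"
    proof -
      have "?P r1 = (c - g0) - ?P h" unfolding r1_def h_def using Px es c_def by (simp add: P_diff P_add)
      moreover have "orthogonal (c - g0) (- ?P h)"
        using g0(2) hE by (simp add: orthogonal_commute orthogonal_clauses)
      ultimately have "(norm (?P r1))\<^sup>2 = m\<^sup>2 + (norm (?P h))\<^sup>2"
        using norm_add_Pythagorean[of "c - g0" "- ?P h"] m_def by simp
      thus ?thesis by simp
    qed
    have muh: "norm h \<le> \<mu> * norm (?P h)" using muE hE by blast
    have "norm (x - us) \<le> norm (r1 - ?P r1) + norm (h - ?P h)" using decomp norm_triangle_ineq by metis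
    also have "\<dots> \<le> \<mu> * d"
      using nonlin[OF _ _ _ _ mu1 pyr pyh bet muh] by (simp add: d_def)
    also have "\<dots> \<le> \<mu> * infdist x ?Vk" using e0(2) d_def mu1 by simp
    finally show ?thesis .
  qed
  show ?thesis using pb usV err by simp
qed

end

theorem theorem3p2:
  fixes Y :: "'y::euclidean_space set"
    and u :: "'y \<Rightarrow> 'v::{real_inner, complete_space}"
    and W :: "'v set" and m :: nat
    and K :: nat and Mk :: "nat \<Rightarrow> 'v set"
    and ubar :: "nat \<Rightarrow> 'v" and Vbar :: "nat \<Rightarrow> 'v set" and n :: "nat \<Rightarrow> nat"
    and eps :: "nat \<Rightarrow> real" and \<sigma> :: real
    and S :: "'v \<Rightarrow> real" and r R :: real
    and kstar :: "'v \<Rightarrow> nat" and kstar_id :: "'v \<Rightarrow> nat"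
  assumes Y: "compact Y"
    and u: "continuous_on Y u"
    and W: "subspace_of_dim W m"
    and K: "K \<ge> 1"
    and cover: "(\<Union>k\<in>{1..K}. Mk k) = u ` Y"
    and Vbar: "\<And>k. k \<in> {1..K} \<Longrightarrow> subspace_of_dim (Vbar k) (n k) \<and> n k \<le> m"
    and eps: "\<And>k x. k \<in> {1..K} \<Longrightarrow> x \<in> Mk k \<Longrightarrow>
                 infdist x ((\<lambda>z. ubar k + z) ` Vbar k) \<le> eps k"
    and mu_fin: "\<And>k. k \<in> {1..K} \<Longrightarrow> mu (Vbar k) W < \<infinity>"
    and sig_pos: "\<sigma> > 0"
    and admissible: "\<And>k. k \<in> {1..K} \<Longrightarrow> mu (Vbar k) W * ereal (eps k) \<le> ereal \<sigma>"
    and rR: "0 < r" "r \<le> R"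
    and S: "\<And>v. r * infdist v (u ` Y) \<le> S v \<and> S v \<le> R * infdist v (u ` Y)"
    and kstar: "\<And>w. w \<in> W \<Longrightarrow> kstar w \<in> {1..K} \<and>
       (\<forall>k\<in>{1..K}. S (pbdw W ((\<lambda>z. ubar (kstar w) + z) ` Vbar (kstar w)) w)
                   \<le> S (pbdw W ((\<lambda>z. ubar k + z) ` Vbar k) w))"
    and kstar_id: "\<And>w. w \<in> W \<Longrightarrow> kstar_id w \<in> {1..K} \<and>
       (\<forall>k\<in>{1..K}. infdist (pbdw W ((\<lambda>z. ubar (kstar_id w) + z) ` Vbar (kstar_id w)) w) (u ` Y)
                   \<le> infdist (pbdw W ((\<lambda>z. ubar k + z) ` Vbar k) w) (u ` Y))"
  shows "(SUP x\<in>u ` Y. ereal (norm (x - pbdw W ((\<lambda>z. ubar (kstar (projW W x)) + z)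
                      ` Vbar (kstar (projW W x))) (projW W x))))
           \<le> delta (u ` Y) W ((R / r) * \<sigma>)
      \<and> (SUP x\<in>u ` Y. ereal (norm (x - pbdw W ((\<lambda>z. ubar (kstar_id (projW W x)) + z)
                      ` Vbar (kstar_id (projW W x))) (projW W x))))
           \<le> delta (u ` Y) W \<sigma>"
proof -
  obtain BW where finW: "finite BW" and Wsp: "W = span BW"
    using W unfolding subspace_of_dim_def by auto
  let ?M = "u ` Y"
  let ?P = "projW W"
  let ?Vk = "\<lambda>k. (\<lambda>z. ubar k + z) ` Vbar k"
  have key: "pbdw W (?Vk k) w \<in> Vw W w \<and>
      (\<forall>x\<in>Mk k. ?P x = w \<longrightarrow> infdist (pbdw W (?Vk k) w) ?M \<le> \<sigma>)"
    if k: "k \<in> {1..K}" and w: "w \<in> W" for k w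
  proof -
    obtain BE where finE: "finite BE" and Esp: "Vbar k = span BE"
      using Vbar[OF k] unfolding subspace_of_dim_def by auto
    obtain \<mu> where m1: "1 \<le> \<mu>" and meq: "mu (Vbar k) W = ereal \<mu>"
        and mE: "\<forall>h\<in>Vbar k. norm h \<le> \<mu> * norm (projW W h)"
      using mu_real[OF finW Wsp, of "Vbar k"] Esp mu_fin[OF k] by auto
    note pm = pbdw_main[OF finW Wsp finE Esp mE m1 w, of "ubar k"]
    have "infdist (pbdw W (?Vk k) w) ?M \<le> \<sigma>" if x: "x \<in> Mk k" "?P x = w" for x
    proof -
      have xM: "x \<in> ?M" using x cover k by blast
      have "infdist (pbdw W (?Vk k) w) ?M \<le> dist (pbdw W (?Vk k) w) x" using xM by (rule infdist_le)
      also have "\<dots> = norm (x - pbdw W (?Vk k) w)" by (simp add: dist_norm norm_minus_commute)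
      also have "\<dots> \<le> \<mu> * infdist x (?Vk k)" using pm x by blast
      also have "\<dots> \<le> \<mu> * eps k" using eps[OF k x(1)] m1 by simp
      also have "\<dots> \<le> \<sigma>" using admissible[OF k] meq by simp
      finally show ?thesis .
    qed
    thus ?thesis using pm by blast
  qed
  have fin: "ereal (norm (x - pbdw W (?Vk k) (?P x))) \<le> delta ?M W s"
    if x: "x \<in> ?M" and k: "k \<in> {1..K}" and s: "infdist (pbdw W (?Vk k) (?P x)) ?M \<le> s" for x k s
  proof -
    let ?us = "pbdw W (?Vk k) (?P x)"
    have "?us \<in> Vw W (?P x)" using key[OF k P_in[OF finW Wsp]] by blast
    then obtain q where q: "q \<in> orthogonal_comp W" "?us = ?P x + q" unfolding Vw_def by auto
    have xe: "x - ?us = (x - ?P x) - q" using q by simp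
    have orth: "x - ?us \<in> orthogonal_comp W"
      unfolding xe using subspace_diff[OF subspace_orthogonal_comp, of "x - ?P x" W q] P_orth[OF finW Wsp, of x] q
      by simp
    have s0: "0 \<le> s" using s infdist_nonneg order_trans by blast
    have "x \<in> Msig ?M s" unfolding Msig_def using x s0 by simp
    moreover have "?us \<in> Msig ?M s" unfolding Msig_def using s by simp
    ultimately show ?thesis unfolding delta_def using orth
      by (intro Sup_upper) blast
  qed
  have A: "ereal (norm (x - pbdw W (?Vk (kstar (?P x))) (?P x))) \<le> delta ?M W ((R / r) * \<sigma>)"
    if x: "x \<in> ?M" for x
  proof -
    obtain k0 where k0: "k0 \<in> {1..K}" "x \<in> Mk k0" using x cover by blast
    have w: "?P x \<in> W" using P_in[OF finW Wsp] .
    have k1: "kstar (?P x) \<in> {1..K}" using kstar[OF w] by blast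
    have "r * infdist (pbdw W (?Vk (kstar (?P x))) (?P x)) ?M \<le> S (pbdw W (?Vk (kstar (?P x))) (?P x))"
      using S by blast
    also have "\<dots> \<le> S (pbdw W (?Vk k0) (?P x))" using kstar[OF w] k0 by blast
    also have "\<dots> \<le> R * infdist (pbdw W (?Vk k0) (?P x)) ?M" using S by blast
    also have "\<dots> \<le> R * \<sigma>"
    proof -
      have "infdist (pbdw W (?Vk k0) (?P x)) ?M \<le> \<sigma>" using key[OF k0(1) w] k0 by blast
      thus ?thesis using rR by (simp add: mult_left_mono)
    qed
    finally have "infdist (pbdw W (?Vk (kstar (?P x))) (?P x)) ?M \<le> (R / r) * \<sigma>"
      using rR by (simp add: pos_le_divide_eq mult.commute mult.left_commute)
    thus ?thesis using fin[OF x k1] by blast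
  qed
  have B: "ereal (norm (x - pbdw W (?Vk (kstar_id (?P x))) (?P x))) \<le> delta ?M W \<sigma>"
    if x: "x \<in> ?M" for x
  proof -
    obtain k0 where k0: "k0 \<in> {1..K}" "x \<in> Mk k0" using x cover by blast
    have w: "?P x \<in> W" using P_in[OF finW Wsp] .
    have k1: "kstar_id (?P x) \<in> {1..K}" using kstar_id[OF w] by blast
    have "infdist (pbdw W (?Vk (kstar_id (?P x))) (?P x)) ?M \<le> infdist (pbdw W (?Vk k0) (?P x)) ?M"
      using kstar_id[OF w] k0 by blast
    also have "\<dots> \<le> \<sigma>" using key[OF k0(1) w] k0 by blast
    finally show ?thesis using fin[OF x k1] by blast
  qed
  show ?thesis using A B by (auto intro!: SUP_least)
qed

end
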